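(* Let $\mu$ be an integer with $h/2<\mu\le h$ and $p\in\mathcal P$. Then $D_\mu(p)=\bigcup_{\Gamma\in\mathcal C(\Gamma_\mu(p))}\max(\Gamma)\supseteq\bigcup_{\Gamma\in\mathcal A(\Gamma_\mu(p))}\max(\Gamma)\supseteq \mathrm I(\Gamma_\mu(p))$ and $|D_\mu(p)|=\sum_{\Gamma\in\mathcal C(\Gamma_\mu(p))}|\max(\Gamma)|\ge|\mathcal A(\Gamma_\mu(p))|\ge|\mathrm I(\Gamma_\mu(p))|$.
   Context: Let $n,h\ge2$, $N=\{1,\dots,n\}$, $H=\{1,\dots,h\}$, $\mathcal P$ the set of $h$-tuples of linear orders on $N$; $x>_{p_i}y$ means $x\neq y$ and $p_i$ ranks $x$ above $y$. Write $x>^p_\mu y$ if $|\{i: x>_{p_i}y\}|\ge\mu$; $D_\mu(p)=\{x\in N: \forall y,\ |\{i: y>_{p_i}x\}|<\mu\}$. The $\mu$-majority graph is the directed graph $\Gamma_\mu(p)=(N,\{(x,y): x>^p_\mu y\})$. For a directed graph $\Gamma=(V,A)$ (with $A\subseteq\{(x,y)\in V^2:x\ne y\}$): $\max(\Gamma)$ is the set of $x\in V$ with no $y$ such that $(y,x)\in A$; $\mathrm I(\Gamma)$ is the set of vertices $x$ with $(x,y),(y,x)\notin A$ for all $y\ne x$; connected components are those of the underlying undirected graph; a cycle is a subgraph on distinct vertices $x_1,\dots,x_l$ ($l\ge2$) with arcs exactly $(x_j,x_{j+1})$, $x_{l+1}=x_1$; $\Gamma$ is acyclic if it has no cycle as a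 subgraph. $\mathcal C(\Gamma_\mu(p))$ is the set of connected components of $\Gamma_\mu(p)$ and $\mathcal A(\Gamma_\mu(p))$ the set of those that are acyclic. *)

theory Defs
  imports Main
begin

(* A profile: p i is a linear order on N = {1..n} for each voter i in H = {1..h}.
   Convention: (x,y) \<in> p i means voter i ranks x at least as high as y. *)
definition profile :: "nat \<Rightarrow> nat \<Rightarrow> (nat \<Rightarrow> (nat \<times> nat) set) \<Rightarrow> bool" where
  "profile n h p \<longleftrightarrow> (\<forall>i\<in>{1..h}. linear_order_on {1..n} (p i))"

definition pref :: "(nat \<Rightarrow> (nat \<times> nat) set) \<Rightarrow> nat \<Rightarrow> nat \<Rightarrow> nat \<Rightarrow> bool" where
  "pref p i x y \<longleftrightarrow> x \<noteq> y \<and> (x, y) \<in> p i"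

definition support :: "nat \<Rightarrow> (nat \<Rightarrow> (nat \<times> nat) set) \<Rightarrow> nat \<Rightarrow> nat \<Rightarrow> nat" where
  "support h p x y = card {i \<in> {1..h}. pref p i x y}"

definition Dmu :: "nat \<Rightarrow> nat \<Rightarrow> nat \<Rightarrow> (nat \<Rightarrow> (nat \<times> nat) set) \<Rightarrow> nat set" where
  "Dmu n h \<mu> p = {x \<in> {1..n}. \<forall>y\<in>{1..n}. support h p y x < \<mu>}"

type_synonym 'a digraph = "'a set \<times> ('a \<times> 'a) set"

definition majority_graph :: "nat \<Rightarrow> nat \<Rightarrow> nat \<Rightarrow> (nat \<Rightarrow> (nat \<times> nat) set) \<Rightarrow> nat digraph" where
  "majority_graph n h \<mu> p =
     ({1..n}, {(x, y). x \<in> {1..n} \<and> y \<in> {1..n} \<and> support h p x y \<ge> \<mu>})"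

definition maxg :: "'a digraph \<Rightarrow> 'a set" where
  "maxg G = {x \<in> fst G. \<not> (\<exists>y. (y, x) \<in> snd G)}"

definition isolated :: "'a digraph \<Rightarrow> 'a set" where
  "isolated G = {x \<in> fst G. \<forall>y. y \<noteq> x \<longrightarrow> (x, y) \<notin> snd G \<and> (y, x) \<notin> snd G}"

(* connected components of the underlying undirected graph, as induced subgraphs *)
definition components :: "'a digraph \<Rightarrow> 'a digraph set" where
  "components G =
     (let V = fst G; A = snd G \<inter> (fst G \<times> fst G)
      in (\<lambda>C. (C, A \<inter> (C \<times> C))) ` (V // ((A \<union> A\<inverse>)\<^sup>*)))"

definition dg_acyclic :: "'a digraph \<Rightarrow> bool" where
  "dg_acyclic G \<longleftrightarrow>
     \<not> (\<exists>xs. distinct xs \<and> length xs \<ge> 2 \<and> set xs \<subseteq> fst G \<and>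
           (\<forall>j < length xs. (xs ! j, xs ! ((j + 1) mod length xs)) \<in> snd G))"

end

theory Submission
  imports Defs
begin

lemma acyclic_source:
  fixes C :: "'a set"
  assumes fin: "finite C" and ne: "C \<noteq> {}" and noloop: "\<forall>x. (x,x) \<notin> E"
    and sub: "E \<subseteq> C \<times> C" and acy: "dg_acyclic (C, E)"
  shows "maxg (C, E) \<noteq> {}"
proof
  assume emp: "maxg (C, E) = {}"
  have pred: "\<forall>x\<in>C. \<exists>y\<in>C. (y,x) \<in> E"
  proof
    fix x assume "x \<in> C"
    with emp have "\<exists>y. (y,x) \<in> E" unfolding maxg_def by auto
    then show "\<exists>y\<in>C. (y,x) \<in> E" using sub by auto
  qed
  define P where "P xs \<longleftrightarrow> distinct xs \<and> xs \<noteq> [] \<and> set xs \<subseteq> C \<and>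
      (\<forall>j. Suc j < length xs \<longrightarrow> (xs!j, xs!Suc j) \<in> E)" for xs
  obtain x0 where "x0 \<in> C" using ne by auto
  then have P0: "P [x0]" unfolding P_def by auto
  have bnd: "\<forall>xs. P xs \<longrightarrow> length xs < card C + 1"
  proof (intro allI impI)
    fix xs assume "P xs"
    then have d: "distinct xs" and s: "set xs \<subseteq> C" unfolding P_def by auto
    have "length xs = card (set xs)" using d by (simp add: distinct_card)
    moreover have "card (set xs) \<le> card C" using s fin by (rule card_mono[rotated])
    ultimately show "length xs < card C + 1" by simp
  qed
  obtain xs where Pxs: "P xs" and maxl: "\<forall>ys. P ys \<longrightarrow> length ys \<le> length xs"
    using ex_has_greatest_nat[of P "[x0]" length "card C + 1"] P0 bnd by blast
  have x0C: "xs!0 \<in> C" using Pxs unfolding P_def by (auto simp: subset_iff)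
  then obtain y where yC: "y \<in> C" and yE: "(y, xs!0) \<in> E" using pred by blast
  show False
  proof (cases "y \<in> set xs")
    case False
    have "P (y # xs)" using Pxs False yC yE unfolding P_def
      by (auto simp: nth_Cons split: nat.splits)
    with maxl show False by fastforce
  next
    case True
    then obtain m where m: "m < length xs" "xs!m = y" by (auto simp: in_set_conv_nth)
    have "m \<noteq> 0" using m yE noloop by (metis)
    define ys where "ys = take (Suc m) xs"
    have ly: "length ys = Suc m" using m unfolding ys_def by simp
    have "distinct ys" using Pxs unfolding ys_def P_def by simp
    moreover have "set ys \<subseteq> C" using Pxs unfolding ys_def P_def
      by (meson order_trans set_take_subset)
    moreover have "\<forall>j < length ys. (ys ! j, ys ! ((j + 1) mod length ys)) \<in> E"
    proof (intro allI impI)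
      fix j assume j: "j < length ys"
      show "(ys ! j, ys ! ((j + 1) mod length ys)) \<in> E"
      proof (cases "j < m")
        case True
        then have "(j+1) mod length ys = Suc j" using ly by simp
        moreover have "Suc j < length xs" using True m by simp
        ultimately show ?thesis using Pxs True unfolding P_def ys_def by simp
      next
        case False
        then have "j = m" using j ly by simp
        then show ?thesis using ly m yE unfolding ys_def by simp
      qed
    qed
    moreover have "length ys \<ge> 2" using ly \<open>m \<noteq> 0\<close> by simp
    ultimately have "\<not> dg_acyclic (C, E)" unfolding dg_acyclic_def by auto
    with acy show False by simp
  qed
qed

theorem proposition6:
  fixes n h \<mu> :: nat and p :: "nat \<Rightarrow> (nat \<times> nat) set"
  assumes "n \<ge> 2" and "h \<ge> 2"
    and "h < 2 * \<mu>" and "\<mu> \<le> h"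
    and "profile n h p"
  shows "let G = majority_graph n h \<mu> p;
             Cs = components G;
             As = {\<Gamma> \<in> Cs. dg_acyclic \<Gamma>}
         in Dmu n h \<mu> p = (\<Union>\<Gamma>\<in>Cs. maxg \<Gamma>)
            \<and> (\<Union>\<Gamma>\<in>As. maxg \<Gamma>) \<subseteq> Dmu n h \<mu> p
            \<and> isolated G \<subseteq> (\<Union>\<Gamma>\<in>As. maxg \<Gamma>)
            \<and> card (Dmu n h \<mu> p) = (\<Sum>\<Gamma>\<in>Cs. card (maxg \<Gamma>))
            \<and> (\<Sum>\<Gamma>\<in>Cs. card (maxg \<Gamma>)) \<ge> card As
            \<and> card As \<ge> card (isolated G)"
proof -
  define V where "V = {1..n}"
  define A where "A = {(x, y). x \<in> {1..n} \<and> y \<in> {1..n} \<and> support h p x y \<ge> \<mu>}"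
  define R where "R = (A \<union> A\<inverse>)\<^sup>*"
  define Cs where "Cs = (\<lambda>C. (C, A \<inter> (C \<times> C))) ` (V // R)"
  define As where "As = {\<Gamma> \<in> Cs. dg_acyclic \<Gamma>}"
  have G: "majority_graph n h \<mu> p = (V, A)" unfolding majority_graph_def V_def A_def by simp
  have AV: "A \<subseteq> V \<times> V" unfolding A_def V_def by auto
  have AVV: "A \<inter> (V \<times> V) = A" using AV by auto
  have CsG: "components (V, A) = Cs" unfolding components_def Cs_def R_def Let_def
    using AVV by simp
  have finV: "finite V" unfolding V_def by simp
  have mu1: "\<mu> \<ge> 1" using assms by linarith
  have noloop: "\<forall>x. (x,x) \<notin> A"
  proof
    fix x
    have "support h p x x = 0" unfolding support_def pref_def by simp
    then show "(x,x) \<notin> A" using mu1 unfolding A_def by auto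
  qed
  have RV: "(x,z) \<in> R \<Longrightarrow> x \<in> V \<Longrightarrow> z \<in> V" for x z
    unfolding R_def by (induct rule: rtrancl_induct) (use AV in auto)
  have symR: "(u,v) \<in> R \<Longrightarrow> (v,u) \<in> R" for u v
    unfolding R_def by (metis converse_Un converse_converse rtrancl_converseI sup_commute)
  have quot: "V // R = (\<lambda>x. R``{x}) ` V" unfolding quotient_def by auto
  have F1: "C \<subseteq> V" "C \<noteq> {}" "finite C" if CQ: "C \<in> V // R" for C
  proof -
    obtain x where x: "x \<in> V" "C = R``{x}" using CQ quot by auto
    show "C \<subseteq> V" using x RV by auto
    then show "finite C" using finV finite_subset by auto
    show "C \<noteq> {}" using x unfolding R_def by auto
  qed
  have F2: "y \<in> C" if H: "C \<in> V // R" "x \<in> C" "(y,x) \<in> A" for C x y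
  proof -
    obtain z where z: "C = R``{z}" using H quot by auto
    have "(z,x) \<in> R" using z H by auto
    moreover have "(x,y) \<in> A \<union> A\<inverse>" using H by auto
    ultimately have "(z,y) \<in> R" unfolding R_def by (rule rtrancl_into_rtrancl)
    then show ?thesis using z by auto
  qed
  have F3: "C1 = C2" if H: "C1 \<in> V // R" "C2 \<in> V // R" "x \<in> C1" "x \<in> C2" for C1 C2 x
  proof -
    obtain a where a: "C1 = R``{a}" using H quot by auto
    obtain b where b: "C2 = R``{b}" using H quot by auto
    have ab: "(a,b) \<in> R" using a b H symR unfolding R_def
      by (metis Image_singleton_iff rtrancl_trans)
    show ?thesis unfolding a b using ab symR unfolding R_def
      by (auto intro: rtrancl_trans)
  qed
  have Dm: "Dmu n h \<mu> p = maxg (V, A)"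
    unfolding Dmu_def maxg_def A_def V_def by (auto simp del: atLeastAtMost_iff)
  have U: "maxg (V, A) = (\<Union>\<Gamma>\<in>Cs. maxg \<Gamma>)"
  proof
    show "maxg (V, A) \<subseteq> (\<Union>\<Gamma>\<in>Cs. maxg \<Gamma>)"
    proof
      fix x assume x: "x \<in> maxg (V, A)"
      then have xV: "x \<in> V" unfolding maxg_def by auto
      have C: "R``{x} \<in> V // R" using xV quot by auto
      have "x \<in> R``{x}" unfolding R_def by auto
      then have "x \<in> maxg (R``{x}, A \<inter> (R``{x} \<times> R``{x}))"
        using x unfolding maxg_def by auto
      then show "x \<in> (\<Union>\<Gamma>\<in>Cs. maxg \<Gamma>)" using C unfolding Cs_def by auto
    qed
    show "(\<Union>\<Gamma>\<in>Cs. maxg \<Gamma>) \<subseteq> maxg (V, A)"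
    proof
      fix x assume "x \<in> (\<Union>\<Gamma>\<in>Cs. maxg \<Gamma>)"
      then obtain C where C: "C \<in> V // R" and x: "x \<in> maxg (C, A \<inter> (C \<times> C))"
        unfolding Cs_def by auto
      have xC: "x \<in> C" using x unfolding maxg_def by auto
      have "\<not> (\<exists>y. (y,x) \<in> A)"
      proof
        assume "\<exists>y. (y,x) \<in> A"
        then obtain y where "(y,x) \<in> A" by auto
        moreover then have "y \<in> C" using F2 C xC by blast
        ultimately show False using x xC unfolding maxg_def by auto
      qed
      then show "x \<in> maxg (V, A)" using xC F1[OF C] unfolding maxg_def by auto
    qed
  qed
  have finQ: "finite (V // R)" using quot finV by simp
  have finCs: "finite Cs" unfolding Cs_def using finQ by simp
  have finAs: "finite As" unfolding As_def using finCs by simp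
  have finM: "finite (maxg \<Gamma>)" if H: "\<Gamma> \<in> Cs" for \<Gamma>
  proof -
    obtain C where "C \<in> V // R" "\<Gamma> = (C, A \<inter> (C \<times> C))" using H unfolding Cs_def by auto
    then show ?thesis using F1 unfolding maxg_def by auto
  qed
  have card1: "card (\<Union>\<Gamma>\<in>Cs. maxg \<Gamma>) = (\<Sum>\<Gamma>\<in>Cs. card (maxg \<Gamma>))"
  proof (rule card_UN_disjoint[OF finCs])
    show "\<forall>\<Gamma>\<in>Cs. finite (maxg \<Gamma>)" using finM by blast
    show "\<forall>\<Gamma>1\<in>Cs. \<forall>\<Gamma>2\<in>Cs. \<Gamma>1 \<noteq> \<Gamma>2 \<longrightarrow> maxg \<Gamma>1 \<inter> maxg \<Gamma>2 = {}"
    proof (intro ballI impI)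
      fix \<Gamma>1 \<Gamma>2 assume g1: "\<Gamma>1 \<in> Cs" and g2: "\<Gamma>2 \<in> Cs" and ne: "\<Gamma>1 \<noteq> \<Gamma>2"
      obtain C1 where c1: "C1 \<in> V // R" "\<Gamma>1 = (C1, A \<inter> (C1 \<times> C1))" using g1 unfolding Cs_def by auto
      obtain C2 where c2: "C2 \<in> V // R" "\<Gamma>2 = (C2, A \<inter> (C2 \<times> C2))" using g2 unfolding Cs_def by auto
      have "C1 \<noteq> C2" using ne c1 c2 by auto
      then have "C1 \<inter> C2 = {}" using F3 c1 c2 by blast
      then show "maxg \<Gamma>1 \<inter> maxg \<Gamma>2 = {}" using c1 c2 unfolding maxg_def by auto
    qed
  qed
  have S1: "(\<Sum>\<Gamma>\<in>Cs. card (maxg \<Gamma>)) \<ge> card As"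
  proof -
    have "card As = (\<Sum>\<Gamma>\<in>As. 1)" by simp
    also have "\<dots> \<le> (\<Sum>\<Gamma>\<in>As. card (maxg \<Gamma>))"
    proof (rule sum_mono)
      fix \<Gamma> assume g: "\<Gamma> \<in> As"
      then obtain C where c: "C \<in> V // R" "\<Gamma> = (C, A \<inter> (C \<times> C))" and acy: "dg_acyclic \<Gamma>"
        unfolding As_def Cs_def by auto
      have "maxg \<Gamma> \<noteq> {}" unfolding c(2)
        by (rule acyclic_source) (use F1[OF c(1)] noloop acy c(2) in auto)
      moreover have "finite (maxg \<Gamma>)" using finM g unfolding As_def by auto
      ultimately show "1 \<le> card (maxg \<Gamma>)" by (simp add: Suc_le_eq card_gt_0_iff)
    qed
    also have "\<dots> \<le> (\<Sum>\<Gamma>\<in>Cs. card (maxg \<Gamma>))"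
      by (rule sum_mono2[OF finCs]) (auto simp: As_def)
    finally show ?thesis .
  qed
  have isoC: "R``{x} = {x}" if "x \<in> isolated (V, A)" for x
  proof -
    have "z = x" if "(x,z) \<in> R" for z
      using that unfolding R_def
    proof (induct rule: rtrancl_induct)
      case base then show ?case by simp
      next
      case (step y z)
      then show ?case using \<open>x \<in> isolated (V, A)\<close> noloop unfolding isolated_def by auto
    qed
    then show ?thesis unfolding R_def by auto
  qed
  have isoAs: "({x}, {}) \<in> As" if H: "x \<in> isolated (V, A)" for x
  proof -
    have xV: "x \<in> V" using H unfolding isolated_def by auto
    have "{x} \<in> V // R" using quot isoC[OF H] xV by force
    moreover have "A \<inter> ({x} \<times> {x}) = {}" using noloop by auto
    ultimately have "({x}, {}) \<in> Cs" unfolding Cs_def by force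
    moreover have "dg_acyclic ({x}, {})" unfolding dg_acyclic_def
      by (auto intro: exI[of _ 0])
    ultimately show ?thesis unfolding As_def by auto
  qed
  have I1: "isolated (V, A) \<subseteq> (\<Union>\<Gamma>\<in>As. maxg \<Gamma>)"
  proof
    fix x assume x: "x \<in> isolated (V, A)"
    have "x \<in> maxg ({x}, {})" unfolding maxg_def by simp
    then show "x \<in> (\<Union>\<Gamma>\<in>As. maxg \<Gamma>)" using isoAs[OF x] by blast
  qed
  have I2: "card As \<ge> card (isolated (V, A))"
  proof (rule card_inj_on_le[OF _ _ finAs])
    show "inj_on (\<lambda>x. ({x}, {} :: (nat \<times> nat) set)) (isolated (V, A))" by (auto simp: inj_on_def)
    show "(\<lambda>x. ({x}, {})) ` isolated (V, A) \<subseteq> As" using isoAs by auto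
  qed
  have AsCs: "(\<Union>\<Gamma>\<in>As. maxg \<Gamma>) \<subseteq> (\<Union>\<Gamma>\<in>Cs. maxg \<Gamma>)" unfolding As_def by auto
  show ?thesis unfolding Let_def G CsG As_def[symmetric] Dm[symmetric] U[symmetric]
    using Dm U card1 S1 I1 I2 AsCs by auto
qed

end
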